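(* Let $f=\sum_{k\ge0}c_kh_{2^k}$ be a first-order Haar chaos with $f\in L^1$ and $c_0\neq0$. Let $\{d_k\}_{k\ge0}$ be defined by $c_0d_0=1$ and $\sum_{j=0}^kc_{k-j}d_j=0$ for $k\ge1$ (i.e. $\sum_kd_kz^k=1/\hat f(z)$ as formal power series). For $n\ge1$ let $m=\lfloor\log_2n\rfloor$, let $\nu(n)$ be the largest integer with $2^{\nu(n)}\mid n$, and set $g^n=\sum_{j=0}^{\nu(n)}d_j2^{m-j}h_{n/2^j}$. Then $\{g^n\}_{n\ge1}$ is biorthogonal to the system of dilations and translations $\{f_n\}_{n\ge1}$ of $f$: $\int_0^1f_l(t)g^n(t)\,dt=\delta_{ln}$ for all $l,n\ge1$.
   Context: All functions are complex-valued on $I=(0,1]$. Let $h=\chi_{(0,1/2]}-\chi_{(1/2,1]}$; for $n=2^k+j$ with $k\ge0$, $0\le j\le2^k-1$, $h_n(t)=h(2^kt-j)$ on $(j2^{-k},(j+1)2^{-k}]$ and $0$ otherwise. For mean-zero $f\in L^1$, the system of dilations and translations is $f_n(t)=f(2^kt-j)$ on $(j2^{-k},(j+1)2^{-k}]$, $0$ otherwise. A first-order Haar chaos is $f=\sum_{k\ge0}c_kh_{2^k}$, $c_k\in\mathbb C$; its symbol is $\hat f(z)=\sum_kc_kz^k$. *)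

theory Defs
  imports "HOL-Analysis.Analysis" "HOL-Computational_Algebra.Factorial_Ring"
begin

definition haar :: "real \<Rightarrow> complex" where
  "haar t = (if 0 < t \<and> t \<le> 1/2 then 1 else if 1/2 < t \<and> t \<le> 1 then -1 else 0)"

definition lev :: "nat \<Rightarrow> nat" where
  "lev n = nat \<lfloor>log 2 (real n)\<rfloor>"

definition pos :: "nat \<Rightarrow> nat" where
  "pos n = n - 2 ^ lev n"

definition dil :: "(real \<Rightarrow> complex) \<Rightarrow> nat \<Rightarrow> real \<Rightarrow> complex" where
  "dil f n t = (if real (pos n) / 2 ^ lev n < t \<and> t \<le> (real (pos n) + 1) / 2 ^ lev n
                then f (2 ^ lev n * t - real (pos n)) else 0)"

definition haarfun :: "nat \<Rightarrow> real \<Rightarrow> complex" where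
  "haarfun n = dil haar n"

text \<open>First-order Haar chaos f = sum_k c_k h_(2^k), as a pointwise sum (for each t only
  finitely many terms are nonzero).\<close>
definition chaos :: "(nat \<Rightarrow> complex) \<Rightarrow> real \<Rightarrow> complex" where
  "chaos c t = (\<Sum>k. c k * haarfun (2 ^ k) t)"

definition gfun :: "(nat \<Rightarrow> complex) \<Rightarrow> nat \<Rightarrow> real \<Rightarrow> complex" where
  "gfun d n t = (\<Sum>j=0..multiplicity (2::nat) n.
                   d j * of_nat (2 ^ (lev n - j)) * haarfun (n div 2 ^ j) t)"

end

theory Submission
  imports Defs
begin

lemma lev_eq: assumes "2^k \<le> n" "n < 2^(k+1)" shows "lev n = k"
  using floor_log_nat_eq_if[of 2 k n] assms unfolding lev_def by simp

lemma lev_bounds: assumes "n \<ge> 1" shows "2 ^ lev n \<le> n" "n < 2 ^ (lev n + 1)"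
proof -
  have "log 2 (real n) \<ge> 0" using assms by simp
  then have "\<lfloor>log 2 (real n)\<rfloor> = int (lev n)"
    unfolding lev_def by simp
  then have "2^lev n \<le> n \<and> n < 2^(lev n + 1)"
    using floor_log_nat_eq_powr_iff[of 2 n "lev n"] assms by simp
  then show "2 ^ lev n \<le> n" "n < 2 ^ (lev n + 1)" by auto
qed

lemma lev_pos_rep: assumes "r < 2^m" shows "lev (2^m + r) = m" "pos (2^m + r) = r"
proof -
  show "lev (2^m + r) = m" by (rule lev_eq) (use assms in auto)
  then show "pos (2^m + r) = r" by (simp add: pos_def)
qed

lemma pos_bound: assumes "n \<ge> 1" shows "n = 2^lev n + pos n" "pos n < 2^lev n"
  using lev_bounds[OF assms] by (auto simp: pos_def)

lemma dil_eq:
  assumes "\<And>t. g t \<noteq> 0 \<Longrightarrow> 0 < t \<and> t \<le> 1"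
  shows "dil g n t = g (2 ^ lev n * t - real (pos n))"
proof -
  have p: "(0::real) < 2 ^ lev n" by simp
  have "(real (pos n) / 2 ^ lev n < t \<and> t \<le> (real (pos n) + 1) / 2 ^ lev n) \<longleftrightarrow>
        (0 < 2 ^ lev n * t - real (pos n) \<and> 2 ^ lev n * t - real (pos n) \<le> 1)"
    using p by (simp add: field_simps)
  show ?thesis
  proof (cases "real (pos n) / 2 ^ lev n < t \<and> t \<le> (real (pos n) + 1) / 2 ^ lev n")
    case True then show ?thesis unfolding dil_def by simp
  next
    case False
    then have "g (2 ^ lev n * t - real (pos n)) = 0" using assms \<open>_ \<longleftrightarrow> _\<close> by blast
    then show ?thesis using False unfolding dil_def by simp
  qed
qed

lemma haar_out: "haar t \<noteq> 0 \<Longrightarrow> 0 < t \<and> t \<le> 1"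
  by (auto simp: haar_def split: if_splits)

lemma haarfun_eq: "haarfun q t = haar (2 ^ lev q * t - real (pos q))"
  unfolding haarfun_def by (rule dil_eq[OF haar_out])

lemma haarfun_ind: "haarfun q t =
   indicator {real (pos q) / 2^lev q <.. (real (pos q) + 1/2) / 2^lev q} t
 - indicator {(real (pos q) + 1/2) / 2^lev q <.. (real (pos q) + 1) / 2^lev q} t"
proof -
  have p: "(0::real) < 2 ^ lev q" by simp
  show ?thesis unfolding haarfun_eq haar_def using p
    by (auto simp: indicator_def field_simps)
qed

lemma haarfun_pow: "haarfun (2^k) t = haar (2^k * t)"
  unfolding haarfun_eq using lev_pos_rep[of 0 k] by simp

lemma chaos_out: assumes "\<not> (0 < t \<and> t \<le> 1)" shows "chaos c t = 0"
proof -
  have "haarfun (2^k) t = 0" for k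
  proof -
    have "\<not> (0 < 2^k * t \<and> 2^k*t \<le> (1::real))"
    proof
      assume h: "0 < 2^k * t \<and> 2^k*t \<le> (1::real)"
      then have "0 < t" by (simp add: zero_less_mult_iff)
      moreover have "t \<le> 1" using h
        by (smt (verit) mult_le_cancel_right1 one_le_power)
      ultimately show False using assms by simp
    qed
    then show ?thesis unfolding haarfun_pow using haar_out by blast
  qed
  then show ?thesis unfolding chaos_def by simp
qed

lemma chaos_ann: assumes "1/2^(Suc K) < t" "t \<le> 1/2^K"
  shows "chaos c t = (\<Sum>k<K. c k) - c K"
proof -
  have t0: "0 < t" using assms(1) by (smt (verit) divide_pos_pos zero_less_power)
  have h: "c k * haarfun (2^k) t = (if k < K then c k else if k = K then - c K else 0)" for k
  proof -
    consider "k < K" | "k = K" | "k > K" by arith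
    then show ?thesis
    proof cases
      case 1
      have "2^k * t \<le> 2^k / 2^K" using assms(2) by (simp add: field_simps)
      also have "2^k / 2^K = (1::real) / 2^(K-k)" using 1
        by (simp add: power_diff)
      also have "\<dots> \<le> 1/2" using 1
        by (intro divide_left_mono) (auto intro: self_le_power[of 2 "K-k", simplified] simp: Suc_leI)
      finally show ?thesis using 1 t0 by (simp add: haarfun_pow haar_def)
    next
      case 2
      have "1/2 < 2^K * t" "2^K * t \<le> 1" using assms 2 by (auto simp: field_simps)
      then show ?thesis using 2 by (simp add: haarfun_pow haar_def)
    next
      case 3
      have "(1::real) \<le> 2^k / 2^(Suc K)" using 3
        by (simp add: power_diff[symmetric] Suc_leI)
          (metis Suc_leI power_Suc power_increasing[of "Suc K" k "2::real"] one_le_numeral)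
      also have "\<dots> < 2^k * t" using assms(1) by (simp add: field_simps)
      finally show ?thesis using 3 by (simp add: haarfun_pow haar_def)
    qed
  qed
  have "chaos c t = (\<Sum>k\<in>{..K}. c k * haarfun (2^k) t)"
    unfolding chaos_def by (rule suminf_finite) (auto simp: h)
  also have "\<dots> = (\<Sum>k<K. c k) - c K"
    by (simp add: h lessThan_Suc_atMost[symmetric])
  finally show ?thesis .
qed



locale CH =
  fixes c :: "nat \<Rightarrow> complex" and f :: "real \<Rightarrow> complex"
  assumes f_out: "\<And>t. \<not>(0<t \<and> t\<le>1) \<Longrightarrow> f t = 0"
    and f_int: "integrable lborel f"
    and f_mean: "integral\<^sup>L lborel f = 0"
    and f_ann: "\<And>K t. 1/2^(Suc K) < t \<Longrightarrow> t \<le> 1/2^K \<Longrightarrow> f t = (\<Sum>k<K. c k) - c K"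
begin

definition Phi :: "real \<Rightarrow> complex" where
  "Phi x = integral\<^sup>L lborel (\<lambda>t. indicator {..x} t *\<^sub>R f t)"

lemma int_ind: "A \<in> sets lborel \<Longrightarrow> integrable lborel (\<lambda>t. indicator A t *\<^sub>R f t)"
  by (rule integrable_mult_indicator[OF _ f_int])

lemma Phi_diff: assumes "y \<le> x"
  shows "Phi x - Phi y = integral\<^sup>L lborel (\<lambda>t. indicator {y<..x} t *\<^sub>R f t)"
proof -
  have "Phi x = integral\<^sup>L lborel (\<lambda>t. indicator {..y} t *\<^sub>R f t + indicator {y<..x} t *\<^sub>R f t)"
    unfolding Phi_def using assms
    by (intro Bochner_Integration.integral_cong) (auto simp: indicator_def)
  also have "\<dots> = Phi y + integral\<^sup>L lborel (\<lambda>t. indicator {y<..x} t *\<^sub>R f t)"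
    unfolding Phi_def by (rule Bochner_Integration.integral_add) (auto intro: int_ind)
  finally show ?thesis by simp
qed

lemma Phi_nonpos: "x \<le> 0 \<Longrightarrow> Phi x = 0"
  unfolding Phi_def by (subst Bochner_Integration.integral_cong[of _ _ _ "\<lambda>_. 0"])
    (auto simp: indicator_def f_out)

lemma Phi_ge1: "1 \<le> x \<Longrightarrow> Phi x = 0"
  unfolding Phi_def
  apply (subst Bochner_Integration.integral_cong[of _ _ _ f])
  apply (auto simp: indicator_def f_mean)
  using f_out by fastforce

lemma Phi_lin: assumes "1/2^(Suc K) \<le> x" "x \<le> 1/2^K"
  shows "Phi x = Phi (1/2^Suc K) + of_real (x - 1/2^Suc K) * ((\<Sum>k<K. c k) - c K)"
proof -
  have "Phi x - Phi (1/2^Suc K) = integral\<^sup>L lborel (\<lambda>t. indicator {1/2^Suc K<..x} t *\<^sub>R ((\<Sum>k<K. c k) - c K))"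
    unfolding Phi_diff[OF assms(1)]
    using assms by (intro Bochner_Integration.integral_cong) (auto simp: indicator_def f_ann)
  also have "\<dots> = of_real (x - 1/2^Suc K) * ((\<Sum>k<K. c k) - c K)"
    using assms(1) by (simp add: scaleR_conv_of_real)
  finally show ?thesis by (simp add: algebra_simps)
qed

lemma Phi_pow: "Phi (1/2^K) = of_real (1/2^K) * (\<Sum>k<K. c k)"
proof (induction K)
  case 0 then show ?case using Phi_ge1 by simp
next
  case (Suc K)
  have le: "(1::real)/2^Suc K \<le> 1/2^K" by (simp add: field_simps)
  have aux: "\<And>a b x. a = b + x \<Longrightarrow> b = a - (x::complex)" by simp
  from aux[OF Phi_lin[OF le order.refl]]
  have "Phi (1/2^Suc K) = Phi (1/2^K) - of_real (1/2^K - 1/2^Suc K) * ((\<Sum>k<K. c k) - c K)"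
    by simp
  also have "\<dots> = of_real (1/2^K) * (\<Sum>k<K. c k) - of_real (1/2^K - 1/2^Suc K) * ((\<Sum>k<K. c k) - c K)"
    using Suc by simp
  also have "\<dots> = of_real (1/2^Suc K) * (\<Sum>k<Suc K. c k)"
    by (simp add: field_simps)
  finally show ?case .
qed

end


lemma cov:
  fixes g :: "real \<Rightarrow> complex"
  assumes g: "integrable lborel g"
  shows "integrable lborel (\<lambda>t. indicator {x<..y} t *\<^sub>R g (2^a*t - B))"
    "integral\<^sup>L lborel (\<lambda>t. indicator {x<..y} t *\<^sub>R g (2^a*t - B)) =
      of_real (1/2^a) * integral\<^sup>L lborel (\<lambda>s. indicator {2^a*x-B<..2^a*y-B} s *\<^sub>R g s)"
proof -
  define G where "G s = indicator {2^a*x-B<..2^a*y-B} s *\<^sub>R g s" for s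
  have Gi: "integrable lborel G" unfolding G_def by (rule integrable_mult_indicator[OF _ g]) simp
  have eq: "G (-B + 2^a * t) = indicator {x<..y} t *\<^sub>R g (2^a*t - B)" for t
    unfolding G_def by (simp add: indicator_def)
  have c: "(2::real)^a \<noteq> 0" by simp
  show "integrable lborel (\<lambda>t. indicator {x<..y} t *\<^sub>R g (2^a*t - B))"
    using lborel_integrable_real_affine_iff[OF c, of G "-B"] Gi unfolding eq by simp
  have "integral\<^sup>L lborel G = \<bar>2^a\<bar> *\<^sub>R integral\<^sup>L lborel (\<lambda>t. G (-B + 2^a * t))"
    by (rule lborel_integral_real_affine[OF c])
  then have i2: "integral\<^sup>L lborel (\<lambda>t. G (-B + 2^a * t)) = of_real (1/2^a) * integral\<^sup>L lborel G"
    by (simp add: scaleR_conv_of_real field_simps)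
  have "integral\<^sup>L lborel (\<lambda>t. indicator {x<..y} t *\<^sub>R g (2^a*t - B)) = integral\<^sup>L lborel (\<lambda>t. G (-B + 2^a * t))"
    by (simp only: eq)
  also note i2
  finally show "integral\<^sup>L lborel (\<lambda>t. indicator {x<..y} t *\<^sub>R g (2^a*t - B)) =
      of_real (1/2^a) * integral\<^sup>L lborel (\<lambda>s. indicator {2^a*x-B<..2^a*y-B} s *\<^sub>R g s)"
    by (simp add: G_def[abs_def])
qed

context CH begin

lemma Phi_int: "Phi (of_int z) = 0"
proof (cases "z \<le> 0")
  case True then show ?thesis by (intro Phi_nonpos) simp
next
  case False then show ?thesis by (intro Phi_ge1) simp
qed

lemma V_dyadic:
  fixes i :: int
  shows "2 * Phi (of_int i / 2^N + (1/2^N)/2) - Phi (of_int i / 2^N) - Phi (of_int i/2^N + 1/2^N)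
       = (if i = 0 then of_real (1/2^N) * c N else 0)"
proof -
  consider "i \<le> -1" | "i \<ge> 2^N" | "i = 0" | "1 \<le> i \<and> i < 2^N" by linarith
  then show ?thesis
  proof cases
    case 1
    then have q3: "of_int i / 2^N + 1/2^N \<le> (0::real)"
      by (simp add: field_simps)
    have q4: "(0::real) \<le> (1/2^N)/2" "(1/2^N)/2 \<le> (1/2^N::real)" by (simp_all add: field_simps)
    have q5: "(0::real) \<le> 1/2^N" by simp
    have p: "of_int i / 2^N + (1/2^N)/2 \<le> (0::real)" "of_int i / 2^N \<le> (0::real)"
      "of_int i/2^N + 1/2^N \<le> (0::real)"
      using q3 q4 apply linarith using q3 q5 apply linarith using q3 by simp
    have z: "Phi (of_int i / 2^N + (1/2^N)/2) = 0" "Phi (of_int i / 2^N) = 0"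
      "Phi (of_int i/2^N + 1/2^N) = 0" using Phi_nonpos[OF p(1)] Phi_nonpos[OF p(2)] Phi_nonpos[OF p(3)] by auto
    show ?thesis unfolding z using 1 by simp
  next
    case 2
    then have "(1::real) \<le> of_int i / 2^N"
      by (simp add: field_simps)
    have q5: "(0::real) \<le> 1/2^N" "(0::real) \<le> (1/2^N)/2" by simp_all
    have p: "(1::real) \<le> of_int i / 2^N + (1/2^N)/2" "(1::real) \<le> of_int i / 2^N"
      "(1::real) \<le> of_int i/2^N + 1/2^N"
      using \<open>1 \<le> _\<close> q5 apply linarith using \<open>1 \<le> _\<close> apply simp using \<open>1 \<le> _\<close> q5 by linarith
    have z: "Phi (of_int i / 2^N + (1/2^N)/2) = 0" "Phi (of_int i / 2^N) = 0"
      "Phi (of_int i/2^N + 1/2^N) = 0" using Phi_ge1[OF p(1)] Phi_ge1[OF p(2)] Phi_ge1[OF p(3)] by auto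
    have "i \<noteq> 0" using 2 by (smt (verit) zero_less_power)
    then show ?thesis unfolding z by simp
  next
    case 3
    have h: "(1/2^N)/2 = (1::real)/2^Suc N" by simp
    have a: "of_int i / 2^N = (0::real)" using 3 by simp
    have P: "Phi (1/2^Suc N) = of_real (1/2^Suc N) * (\<Sum>k<Suc N. c k)" by (rule Phi_pow)
    have P0: "Phi (1/2^N) = of_real (1/2^N) * (\<Sum>k<N. c k)" by (rule Phi_pow)
    have P1: "Phi 0 = 0" by (rule Phi_nonpos) simp
    show ?thesis unfolding h a add_0_left P P0 P1 using 3
      by (simp add: field_simps)
  next
    case 4
    define n where "n = nat i"
    have n1: "n \<ge> 1" and n2: "n < 2^N" using 4 unfolding n_def by auto
    have i_n: "of_int i = (real n)" using 4 unfolding n_def by simp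
    define r where "r = lev n"
    have r1: "2^r \<le> n" "n < 2^(r+1)" using lev_bounds[OF n1] r_def by auto
    have "2^r < (2::nat)^N" using r1 n2 by linarith
    then have rN: "r < N" by (rule power_less_imp_less_exp[rotated]) simp
    define K where "K = N - Suc r"
    have NK: "N = Suc K + r" using rN unfolding K_def by simp
    have r1': "(2::real)^r \<le> real n" "real n + 1 \<le> 2^(r+1)"
    proof -
      have "real (2^r) \<le> real n" "real (n+1) \<le> real (2^(r+1))" using r1 by (simp_all only: of_nat_le_iff)
      then show "(2::real)^r \<le> real n" "real n + 1 \<le> 2^(r+1)" by simp_all
    qed
    have eqlo: "(1::real)/2^Suc K = 2^r/2^N" unfolding NK by (simp add: power_add)
    have eqhi: "(1::real)/2^K = 2^(r+1)/2^N" unfolding NK by (simp add: power_add)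
    have lo: "(1::real)/2^Suc K \<le> real n / 2^N"
      unfolding eqlo by (rule divide_right_mono[OF r1'(1)]) simp
    have hi: "real n / 2^N + 1 / 2^N \<le> (1::real)/2^K"
      unfolding eqhi add_divide_distrib[symmetric] by (rule divide_right_mono[OF r1'(2)]) simp
    have pos: "(0::real) \<le> 1/2^N" by simp
    let ?S = "(\<Sum>k<K. c k) - c K"
    let ?a = "real n / 2^N"
    have L1: "\<And>x a w y. (x::real) \<le> a \<Longrightarrow> a + w \<le> y \<Longrightarrow> 0 \<le> w \<Longrightarrow>
        x \<le> a + w/2 \<and> a + w/2 \<le> y \<and> x \<le> a + w \<and> a \<le> y"
      by linarith
    note LL = L1[OF lo hi pos]
    have e1: "Phi ?a = Phi (1/2^Suc K) + of_real (?a - 1/2^Suc K) * ?S"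
      by (rule Phi_lin[OF lo]) (use LL in blast)
    have e2: "Phi (?a + (1/2^N)/2) = Phi (1/2^Suc K) + of_real (?a + (1/2^N)/2 - 1/2^Suc K) * ?S"
      by (rule Phi_lin) (use LL in blast)+
    have e3: "Phi (?a + 1/2^N) = Phi (1/2^Suc K) + of_real (?a + 1/2^N - 1/2^Suc K) * ?S"
      by (rule Phi_lin) (use LL hi in blast)+
    have lin3: "\<And>P x h s S. 2*(P + of_real(x + h - s)*S) - (P + of_real(x - s)*S) - (P + of_real(x + 2*h - s)*S) = (0::complex)"
      by (simp add: algebra_simps)
    have hh: "2 * ((1/2^N)/2) = (1/2^N::real)" by simp
    have "i \<noteq> 0" using 4 by simp
    show ?thesis unfolding i_n e1 e2 e3 if_not_P[OF \<open>i \<noteq> 0\<close>]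
      using lin3[of "Phi (1/2^Suc K)" ?a "(1/2^N)/2" "1/2^Suc K" ?S] unfolding hh .
  qed
qed

end


lemma mult_pow_iff:
  fixes a b e p :: nat
  assumes "b < 2^a" "p < 2^e"
  shows "(\<exists>k. 2^e + p = (2^a + b)*2^k) \<longleftrightarrow> (a \<le> e \<and> p = b*2^(e-a))"
proof
  assume "\<exists>k. 2^e + p = (2^a + b)*2^k"
  then obtain k where k: "2^e + p = (2^a + b)*2^k" by blast
  have r: "(2^a + b)*2^k = 2^(a+k) + b*2^k" by (simp add: algebra_simps power_add)
  have bk: "b*2^k < 2^(a+k)" using assms(1) by (simp add: power_add)
  have "lev (2^e + p) = e" "pos (2^e + p) = p" using lev_pos_rep[OF assms(2)] by auto
  moreover have "lev (2^(a+k) + b*2^k) = a+k" "pos (2^(a+k) + b*2^k) = b*2^k"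
    using lev_pos_rep[OF bk] by auto
  ultimately show "a \<le> e \<and> p = b*2^(e-a)" using k r by auto
next
  assume h: "a \<le> e \<and> p = b*2^(e-a)"
  then have "2^e + p = (2^a + b)*2^(e-a)"
    by (simp add: algebra_simps power_add[symmetric])
  then show "\<exists>k. 2^e + p = (2^a + b)*2^k" by blast
qed

context CH begin

lemma Vab:
  fixes a b e p :: nat
  assumes "b < 2^a" "p < 2^e"
  shows "of_real (1/2^a) * (2 * Phi (2^a*((real p + 1/2)/2^e) - real b) - Phi (2^a*(real p/2^e) - real b)
          - Phi (2^a*((real p + 1)/2^e) - real b))
       = (if a \<le> e \<and> p = b*2^(e-a) then c (e-a) / 2^e else 0)"
proof (cases "a \<le> e")
  case True
  then obtain N where N: "e = a + N" using le_Suc_ex by blast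
  define i where "i = int p - int b * 2^N"
  have x1: "2^a*(real p/2^e) - real b = of_int i / 2^N"
    unfolding N i_def by (simp add: power_add field_simps)
  have x2: "2^a*((real p + 1/2)/2^e) - real b = of_int i / 2^N + (1/2^N)/2"
    unfolding N i_def by (simp add: power_add field_simps)
  have x3: "2^a*((real p + 1)/2^e) - real b = of_int i / 2^N + 1/2^N"
    unfolding N i_def by (simp add: power_add field_simps)
  have ci: "(p = b*2^(e-a)) \<longleftrightarrow> i = 0"
  proof -
    have eN: "e - a = N" using N by simp
    have "int (b*2^N) = int b * 2^N" by simp
    then show ?thesis unfolding i_def eN
      by (metis eq_iff_diff_eq_0 of_nat_eq_iff)
  qed
  have fin: "of_real (1/2^a) * (of_real (1/2^N) * c N) = c (e-a) / 2^e"
  proof -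
    have "(2::complex)^e = 2^a*2^N" unfolding N by (simp add: power_add)
    moreover have "e - a = N" using N by simp
    ultimately show ?thesis by (simp add: field_simps)
  qed
  show ?thesis
  proof (cases "i = 0")
    case i0: True
    then have cond: "a \<le> e \<and> p = b*2^(e-a)" using True ci by simp
    show ?thesis unfolding x1 x2 x3 V_dyadic if_P[OF i0] if_P[OF cond] by (rule fin)
  next
    case i0: False
    then have cond: "\<not> (a \<le> e \<and> p = b*2^(e-a))" using ci by simp
    show ?thesis unfolding x1 x2 x3 V_dyadic if_not_P[OF i0] if_not_P[OF cond] by simp
  qed
next
  case False
  then have "e < a" by simp
  then obtain D where "a = Suc (e + D)" using less_imp_Suc_add by blast
  then have D: "a = e + Suc D" by simp
  define z where "z = 2^Suc D * int p - int b"
  have x1: "2^a*(real p/2^e) - real b = of_int z"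
    unfolding D z_def by (simp add: power_add field_simps)
  have x2: "2^a*((real p + 1/2)/2^e) - real b = of_int (z + 2^D)"
    unfolding D z_def by (simp add: power_add field_simps)
  have x3: "2^a*((real p + 1)/2^e) - real b = of_int (z + 2^Suc D)"
    unfolding D z_def by (simp add: power_add field_simps)
  show ?thesis unfolding x1 x2 x3 Phi_int using False by simp
qed

end


lemma dil_supp: assumes "l \<ge> 1" "dil g l t \<noteq> 0" shows "0 < t \<and> t \<le> 1"
proof -
  have h: "real (pos l) / 2 ^ lev l < t \<and> t \<le> (real (pos l) + 1) / 2 ^ lev l"
    using assms(2) unfolding dil_def by (auto split: if_splits)
  have "pos l + 1 \<le> 2 ^ lev l" using pos_bound[OF assms(1)] by simp
  then have "real (pos l) + 1 \<le> 2 ^ lev l" by (metis of_nat_1 of_nat_add of_nat_le_iff of_nat_numeral of_nat_power)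
  then have "(real (pos l) + 1) / 2 ^ lev l \<le> 1" by simp
  moreover have "0 \<le> real (pos l) / 2 ^ lev l" by simp
  ultimately show ?thesis using h by linarith
qed

context CH begin

lemma key:
  assumes l1: "l \<ge> 1" and q1: "q \<ge> 1"
  shows "integrable lborel (\<lambda>t. dil f l t * haarfun q t)"
    "integral\<^sup>L lborel (\<lambda>t. dil f l t * haarfun q t) =
       (if \<exists>k. q = l*2^k then c (lev q - lev l) / 2^lev q else 0)"
proof -
  define a where "a = lev l"
  define b where "b = pos l"
  define e where "e = lev q"
  define p where "p = pos q"
  have lr: "l = 2^a + b" "b < 2^a" using pos_bound[OF l1] unfolding a_def b_def by auto
  have qr: "q = 2^e + p" "p < 2^e" using pos_bound[OF q1] unfolding e_def p_def by auto
  define x0 where "x0 = real p/2^e"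
  define xm where "xm = (real p + 1/2)/2^e"
  define x1 where "x1 = (real p + 1)/2^e"
  have dl: "dil f l t = f (2^a*t - real b)" for t
    unfolding a_def b_def by (rule dil_eq) (use f_out in blast)
  have hq: "haarfun q t = indicator {x0<..xm} t - indicator {xm<..x1} t" for t
    unfolding x0_def xm_def x1_def e_def p_def by (rule haarfun_ind)
  have eq: "(\<lambda>t. dil f l t * haarfun q t) = (\<lambda>t. indicator {x0<..xm} t *\<^sub>R f (2^a*t - real b)
      - indicator {xm<..x1} t *\<^sub>R f (2^a*t - real b))"
    by (rule ext) (simp add: dl hq indicator_def)
  show "integrable lborel (\<lambda>t. dil f l t * haarfun q t)"
    unfolding eq by (intro Bochner_Integration.integrable_diff cov(1) f_int)
  have o1: "2^a*x0 - real b \<le> 2^a*xm - real b" "2^a*xm - real b \<le> 2^a*x1 - real b"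
    unfolding x0_def xm_def x1_def by (simp_all add: divide_right_mono)
  have "integral\<^sup>L lborel (\<lambda>t. dil f l t * haarfun q t)
      = of_real (1/2^a) * (Phi (2^a*xm - real b) - Phi (2^a*x0 - real b))
        - of_real (1/2^a) * (Phi (2^a*x1 - real b) - Phi (2^a*xm - real b))"
    unfolding eq Phi_diff[OF o1(1)] Phi_diff[OF o1(2)]
    by (subst Bochner_Integration.integral_diff) (auto intro!: cov f_int simp: cov(2)[OF f_int])
  also have "\<dots> = of_real (1/2^a) * (2 * Phi (2^a*xm - real b) - Phi (2^a*x0 - real b) - Phi (2^a*x1 - real b))"
    by (simp add: algebra_simps)
  also have "\<dots> = (if a \<le> e \<and> p = b*2^(e-a) then c (e-a) / 2^e else 0)"
    unfolding x0_def xm_def x1_def by (rule Vab[OF lr(2) qr(2)])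
  also have "\<dots> = (if \<exists>k. q = l*2^k then c (lev q - lev l) / 2^lev q else 0)"
    unfolding mult_pow_iff[OF lr(2) qr(2), symmetric] lr(1)[symmetric] qr(1)[symmetric]
      a_def[symmetric] e_def[symmetric] ..
  finally show "integral\<^sup>L lborel (\<lambda>t. dil f l t * haarfun q t) =
       (if \<exists>k. q = l*2^k then c (lev q - lev l) / 2^lev q else 0)" .
qed

end


lemma sum_conv:
  fixes c d :: "nat \<Rightarrow> complex"
  assumes d0: "c 0 * d 0 = 1"
    and dk: "\<And>k. k \<ge> 1 \<Longrightarrow> (\<Sum>j=0..k. c (k - j) * d j) = 0"
  shows "(\<Sum>j=0..s. d j * c (s - j)) = (if s = 0 then 1 else 0)"
proof (cases "s = 0")
  case True then show ?thesis using d0 by (simp add: mult.commute)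
next
  case False
  then have "(\<Sum>j=0..s. c (s - j) * d j) = 0" using dk by simp
  then show ?thesis using False by (simp add: mult.commute)
qed

lemma lev_mult_pow: assumes "l \<ge> 1" shows "lev (l * 2^s) = lev l + s"
proof -
  have e: "l = 2^lev l + pos l" by (rule pos_bound(1)[OF assms])
  have "(2^lev l + pos l) * 2^s = 2^(lev l + s) + pos l * 2^s" by (simp add: power_add algebra_simps)
  then have "l * 2^s = 2^(lev l + s) + pos l * 2^s" using e by simp
  moreover have "pos l * 2^s < 2^(lev l + s)"
    using pos_bound(2)[OF assms] by (simp add: power_add)
  ultimately show ?thesis using lev_pos_rep by metis
qed

theorem lemma3:
  fixes c d :: "nat \<Rightarrow> complex"
  assumes c0: "c 0 \<noteq> 0"
    and d0: "c 0 * d 0 = 1"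
    and dk: "\<And>k. k \<ge> 1 \<Longrightarrow> (\<Sum>j=0..k. c (k - j) * d j) = 0"
    and int: "set_integrable lborel {0<..1::real} (chaos c)"
    and mean0: "(LINT t:{0<..1::real}|lborel. chaos c t) = 0"
  shows "\<forall>l n. l \<ge> 1 \<longrightarrow> n \<ge> 1 \<longrightarrow>
           (LINT t:{0<..1::real}|lborel. dil (chaos c) l t * gfun d n t) = (if l = n then 1 else 0)"
proof (intro allI impI)
  fix l n :: nat
  assume l1: "l \<ge> 1" and n1: "n \<ge> 1"
  define f where "f = chaos c"
  have fr: "(\<lambda>t. indicator {0<..1::real} t *\<^sub>R f t) = f"
    by (rule ext) (auto simp: indicator_def f_def chaos_out)
  interpret CH c f
  proof
    show "\<And>t. \<not> (0 < t \<and> t \<le> 1) \<Longrightarrow> f t = 0" unfolding f_def by (rule chaos_out)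
    show "integrable lborel f" using int unfolding set_integrable_def f_def[symmetric] fr .
    show "integral\<^sup>L lborel f = 0" using mean0 unfolding set_lebesgue_integral_def f_def[symmetric] fr .
    show "\<And>K t. 1 / 2 ^ Suc K < t \<Longrightarrow> t \<le> 1 / 2 ^ K \<Longrightarrow> f t = sum c {..<K} - c K"
      unfolding f_def by (rule chaos_ann)
  qed
  define m where "m = lev n"
  define \<nu> where "\<nu> = multiplicity (2::nat) n"
  have n0: "n \<noteq> 0" using n1 by simp
  have dvdj: "2^j dvd n" if "j \<le> \<nu>" for j
    using that unfolding \<nu>_def by (rule multiplicity_dvd')
  have q1: "n div 2^j \<ge> 1" if "j \<le> \<nu>" for j
    using dvdj[OF that] n1 by (metis div_greater_zero_iff dvd_imp_le less_one not_le pos2 zero_less_power n0 bot_nat_0.not_eq_extremum)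
  have levq: "lev (n div 2^j) = m - j" if jn: "j \<le> \<nu>" for j
  proof -
    obtain r where r: "n = 2^j * r" using dvdj[OF jn] by blast
    have r1: "r \<ge> 1" using r n0 by (cases r) auto
    have "n div 2^j = r" using r by simp
    moreover have "m = lev r + j" unfolding m_def r using lev_mult_pow[OF r1, of j] by (simp add: mult.commute)
    ultimately show ?thesis by simp
  qed
  have "(LINT t:{0<..1::real}|lborel. dil (chaos c) l t * gfun d n t)
      = integral\<^sup>L lborel (\<lambda>t. \<Sum>j=0..\<nu>. (d j * of_nat (2^(m-j))) * (dil f l t * haarfun (n div 2^j) t))"
    unfolding set_lebesgue_integral_def f_def[symmetric]
  proof (rule Bochner_Integration.integral_cong[OF refl])
    fix t
    show "indicator {0<..1} t *\<^sub>R (dil f l t * gfun d n t) =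
      (\<Sum>j=0..\<nu>. (d j * of_nat (2^(m-j))) * (dil f l t * haarfun (n div 2^j) t))"
    proof (cases "dil f l t = 0")
      case True then show ?thesis by simp
    next
      case False
      then have "0 < t \<and> t \<le> 1" by (rule dil_supp[OF l1])
      then show ?thesis unfolding gfun_def m_def \<nu>_def
        by (simp add: sum_distrib_left algebra_simps)
    qed
  qed
  also have "\<dots> = (\<Sum>j=0..\<nu>. (d j * of_nat (2^(m-j))) * integral\<^sup>L lborel (\<lambda>t. dil f l t * haarfun (n div 2^j) t))"
    by (subst Bochner_Integration.integral_sum) (auto intro!: key(1)[OF l1 q1])
  also have "\<dots> = (\<Sum>j=0..\<nu>. if \<exists>k. n div 2^j = l*2^k then d j * c (m - j - lev l) else 0)"
  proof (rule sum.cong[OF refl])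
    fix j assume "j \<in> {0..\<nu>}"
    then have j: "j \<le> \<nu>" by simp
    show "(d j * of_nat (2^(m-j))) * integral\<^sup>L lborel (\<lambda>t. dil f l t * haarfun (n div 2^j) t)
        = (if \<exists>k. n div 2^j = l*2^k then d j * c (m - j - lev l) else 0)"
      unfolding key(2)[OF l1 q1[OF j]] levq[OF j] by simp
  qed
  also have "\<dots> = (if l = n then 1 else 0)"
  proof (cases "\<exists>s. n = l * 2^s")
    case True
    then obtain s where s: "n = l * 2^s" by blast
    have ms: "m = lev l + s" unfolding m_def s by (rule lev_mult_pow[OF l1])
    have sn: "s \<le> \<nu>" unfolding \<nu>_def s
      by (rule multiplicity_geI) (use n0 s in auto)
    have cond: "(\<exists>k. n div 2^j = l*2^k) \<longleftrightarrow> j \<le> s" if "j \<le> \<nu>" for j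
    proof
      assume "\<exists>k. n div 2^j = l*2^k"
      then obtain k where k: "n div 2^j = l*2^k" by blast
      have "n = n div 2^j * 2^j" using dvdj[OF that] by simp
      then have "l * 2^s = l * 2^(k+j)" using k s by (simp add: power_add) blast
      then have "(2::nat)^s = 2^(k+j)" using l1 by simp
      then have "s = k + j" by simp
      then show "j \<le> s" by simp
    next
      assume "j \<le> s"
      then have "(2::nat)^(s-j) * 2^j = 2^s" by (simp add: power_add[symmetric])
      then have e: "l*2^s = (l*2^(s-j))*2^j" by (simp add: mult.assoc)
      have "n div 2^j = ((l*2^(s-j))*2^j) div 2^j" by (simp only: s e)
      also have "\<dots> = l*2^(s-j)" by (rule nonzero_mult_div_cancel_right) simp
      finally have "n div 2^j = l*2^(s-j)" .
      then show "\<exists>k. n div 2^j = l*2^k" by blast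
    qed
    have "(\<Sum>j=0..\<nu>. if \<exists>k. n div 2^j = l*2^k then d j * c (m - j - lev l) else 0)
        = (\<Sum>j=0..\<nu>. if j \<le> s then d j * c (s - j) else 0)"
      by (rule sum.cong[OF refl]) (auto simp: cond ms)
    also have "\<dots> = (\<Sum>j=0..s. d j * c (s - j))"
      by (rule sum.mono_neutral_cong_right) (use sn in auto)
    also have "\<dots> = (if s = 0 then 1 else 0)" by (rule sum_conv[OF d0 dk])
    also have "\<dots> = (if l = n then 1 else 0)"
    proof -
      have "(s = 0) \<longleftrightarrow> l = n" unfolding s using l1 by (cases s) auto
      then show ?thesis by simp
    qed
    finally show ?thesis .
  next
    case False
    have "\<not> (\<exists>k. n div 2^j = l*2^k)" if "j \<le> \<nu>" for j
    proof
      assume "\<exists>k. n div 2^j = l*2^k"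
      then obtain k where k: "n div 2^j = l*2^k" by blast
      have "n = n div 2^j * 2^j" using dvdj[OF that] by simp
      then have "n = l * 2^(k+j)" using k by (simp add: power_add)
      then show False using False by blast
    qed
    then have "(\<Sum>j=0..\<nu>. if \<exists>k. n div 2^j = l*2^k then d j * c (m - j - lev l) else 0) = 0"
      by (intro sum.neutral) auto
    moreover have "l \<noteq> n" using False by (metis mult.right_neutral power_0)
    ultimately show ?thesis by simp
  qed
  finally show "(LINT t:{0<..1::real}|lborel. dil (chaos c) l t * gfun d n t) = (if l = n then 1 else 0)" .
qed


end
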